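(* Let $X$ be a Tychonoff space with $|X|>1$ and $I\in\mathbb{A}(X)$. Then: (a) $\mathrm{ecc}(I)=3$ iff $\mathcal{O}(I)$ is not a singleton; (b) $\mathrm{ecc}(I)=2$ iff $\mathcal{O}(I)$ is a singleton and $|X|>2$; (c) $\mathrm{ecc}(I)=1$ iff $\mathcal{O}(I)$ is a singleton and $|X|=2$.
   Context: $C(X)$ denotes the ring of all real-valued continuous functions on $X$; $\mathrm{Coz}(f)=\{x: f(x)\neq 0\}$; for $S\subseteq C(X)$, $\mathcal{O}(S)=\bigcup_{f\in S}\mathrm{Coz}(f)$. $\mathbb{A}(X)$ is the set of nonzero ideals $I$ of $C(X)$ for which there is a nonzero ideal $J$ with $IJ=\{0\}$. $\mathbb{AG}(X)$ has vertex set $\mathbb{A}(X)$, distinct $I,J$ adjacent iff $IJ=\{0\}$. The eccentricity $\mathrm{ecc}(I)$ is the maximum of the distances $d(I,J)$ over vertices $J$. *)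

theory Defs
  imports "HOL-Analysis.Analysis" "HOL-Library.Extended_Nat"
begin

definition tychonoff_space :: "'a topology \<Rightarrow> bool" where
  "tychonoff_space X \<longleftrightarrow> completely_regular_space X \<and> t1_space X"

text \<open>C(X): real continuous functions on X, normalised to 0 off the carrier
  so that function equality is equality on X.\<close>
definition CX :: "'a topology \<Rightarrow> ('a \<Rightarrow> real) set" where
  "CX X = {f. continuous_map X euclideanreal f \<and> (\<forall>x. x \<notin> topspace X \<longrightarrow> f x = 0)}"

definition zeroF :: "'a \<Rightarrow> real" where "zeroF = (\<lambda>x. 0)"

definition is_ideal :: "'a topology \<Rightarrow> ('a \<Rightarrow> real) set \<Rightarrow> bool" where
  "is_ideal X I \<longleftrightarrow> I \<subseteq> CX X \<and> zeroF \<in> I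
     \<and> (\<forall>f\<in>I. \<forall>g\<in>I. (\<lambda>x. f x + g x) \<in> I)
     \<and> (\<forall>f\<in>I. \<forall>h\<in>CX X. (\<lambda>x. h x * f x) \<in> I)"

definition ideal_prod :: "'a topology \<Rightarrow> ('a \<Rightarrow> real) set \<Rightarrow> ('a \<Rightarrow> real) set \<Rightarrow> ('a \<Rightarrow> real) set" where
  "ideal_prod X I J = \<Inter>{K. is_ideal X K \<and> (\<forall>f\<in>I. \<forall>g\<in>J. (\<lambda>x. f x * g x) \<in> K)}"

definition AX :: "'a topology \<Rightarrow> ('a \<Rightarrow> real) set set" where
  "AX X = {I. is_ideal X I \<and> I \<noteq> {zeroF} \<and>
     (\<exists>J. is_ideal X J \<and> J \<noteq> {zeroF} \<and> ideal_prod X I J = {zeroF})}"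

definition adj :: "'a topology \<Rightarrow> ('a \<Rightarrow> real) set \<Rightarrow> ('a \<Rightarrow> real) set \<Rightarrow> bool" where
  "adj X I J \<longleftrightarrow> I \<in> AX X \<and> J \<in> AX X \<and> I \<noteq> J \<and> ideal_prod X I J = {zeroF}"

definition walk :: "'a topology \<Rightarrow> (nat \<Rightarrow> ('a \<Rightarrow> real) set) \<Rightarrow> nat \<Rightarrow> bool" where
  "walk X p n \<longleftrightarrow> (\<forall>i\<le>n. p i \<in> AX X) \<and> (\<forall>i<n. adj X (p i) (p (Suc i)))"

text \<open>Graph distance in AG(X) (infinity if no walk exists).\<close>
definition gdist :: "'a topology \<Rightarrow> ('a \<Rightarrow> real) set \<Rightarrow> ('a \<Rightarrow> real) set \<Rightarrow> enat" where
  "gdist X I J = (INF n \<in> {n. \<exists>p. walk X p n \<and> p 0 = I \<and> p n = J}. enat n)"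

definition ecc :: "'a topology \<Rightarrow> ('a \<Rightarrow> real) set \<Rightarrow> enat" where
  "ecc X I = (SUP J \<in> AX X. gdist X I J)"

definition Coz :: "'a topology \<Rightarrow> ('a \<Rightarrow> real) \<Rightarrow> 'a set" where
  "Coz X f = {x \<in> topspace X. f x \<noteq> 0}"

definition cozU :: "'a topology \<Rightarrow> ('a \<Rightarrow> real) set \<Rightarrow> 'a set" where
  "cozU X S = (\<Union>f\<in>S. Coz X f)"

end

theory Submission
  imports Defs
begin

definition SU :: "'a topology \<Rightarrow> 'a set \<Rightarrow> ('a \<Rightarrow> real) set" where
  "SU X U = {f \<in> CX X. Coz X f \<subseteq> U}"

lemma zeroF_CX: "zeroF \<in> CX X"
  by (simp add: CX_def zeroF_def)

lemma Coz_open: "f \<in> CX X \<Longrightarrow> openin X (Coz X f)"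
proof -
  assume "f \<in> CX X"
  then have "continuous_map X euclideanreal f" by (simp add: CX_def)
  then have "openin X {x \<in> topspace X. f x \<in> -{0}}"
    by (rule openin_continuous_map_preimage) auto
  then show ?thesis by (simp add: Coz_def)
qed

lemma cozU_open: "is_ideal X I \<Longrightarrow> openin X (cozU X I)"
proof -
  assume "is_ideal X I"
  then have "I \<subseteq> CX X" by (simp add: is_ideal_def)
  then have "\<And>S. S \<in> Coz X ` I \<Longrightarrow> openin X S" using Coz_open by blast
  then show ?thesis unfolding cozU_def by (rule openin_Union)
qed

lemma cozU_sub: "cozU X I \<subseteq> topspace X"
  by (auto simp: cozU_def Coz_def)

lemma CX_zero_off: "f \<in> CX X \<Longrightarrow> x \<notin> topspace X \<Longrightarrow> f x = 0"
  by (simp add: CX_def)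

lemma nonzero_iff: "is_ideal X I \<Longrightarrow> (I \<noteq> {zeroF}) = (cozU X I \<noteq> {})"
proof -
  assume I: "is_ideal X I"
  have "(\<exists>f\<in>I. f \<noteq> zeroF) = (cozU X I \<noteq> {})"
  proof
    assume "\<exists>f\<in>I. f \<noteq> zeroF"
    then obtain f where f0: "f \<in> I" "f \<noteq> zeroF" by auto
    then obtain x where "f x \<noteq> 0" by (auto simp: zeroF_def fun_eq_iff)
    with f0 have f: "f \<in> I" "f x \<noteq> 0" by auto
    then have "x \<in> topspace X" using I CX_zero_off by (fastforce simp: is_ideal_def)
    then show "cozU X I \<noteq> {}" using f by (auto simp: cozU_def Coz_def)
  next
    assume "cozU X I \<noteq> {}"
    then obtain f x where "f \<in> I" "f x \<noteq> 0" by (auto simp: cozU_def Coz_def)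
    then show "\<exists>f\<in>I. f \<noteq> zeroF" by (metis zeroF_def)
  qed
  moreover have "zeroF \<in> I" using I by (simp add: is_ideal_def)
  ultimately show ?thesis by auto
qed

lemma ideal_sub: "is_ideal X I \<Longrightarrow> f \<in> I \<Longrightarrow> f \<in> CX X"
  unfolding is_ideal_def by blast

lemma ideal_mul: "is_ideal X I \<Longrightarrow> f \<in> I \<Longrightarrow> h \<in> CX X \<Longrightarrow> (\<lambda>x. h x * f x) \<in> I"
  unfolding is_ideal_def by blast

lemma zero_ideal: "is_ideal X {zeroF}"
  using zeroF_CX by (simp add: is_ideal_def zeroF_def)

lemma prod_zero_iff:
  assumes "is_ideal X I" "is_ideal X J"
  shows "(ideal_prod X I J = {zeroF}) = (cozU X I \<inter> cozU X J = {})"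
proof
  assume h: "ideal_prod X I J = {zeroF}"
  show "cozU X I \<inter> cozU X J = {}"
  proof (rule ccontr)
    assume "cozU X I \<inter> cozU X J \<noteq> {}"
    then obtain x f g where fg: "f \<in> I" "g \<in> J" "f x \<noteq> 0" "g x \<noteq> 0"
      by (auto simp: cozU_def Coz_def)
    have "(\<lambda>x. f x * g x) \<in> ideal_prod X I J"
      unfolding ideal_prod_def using fg by auto
    then have "(\<lambda>x. f x * g x) = zeroF" using h by auto
    then have "f x * g x = 0" by (metis zeroF_def)
    then show False using fg by simp
  qed
next
  assume d: "cozU X I \<inter> cozU X J = {}"
  have prods: "\<forall>f\<in>I. \<forall>g\<in>J. (\<lambda>x. f x * g x) \<in> {zeroF}"
  proof (intro ballI)
    fix f g assume fg: "f \<in> I" "g \<in> J"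
    have "f x * g x = 0" for x
    proof (cases "x \<in> topspace X")
      case True
      then show ?thesis using d fg by (auto simp: cozU_def Coz_def)
    next
      case False
      then show ?thesis using fg assms CX_zero_off by (fastforce simp: is_ideal_def)
    qed
    then show "(\<lambda>x. f x * g x) \<in> {zeroF}" by (simp add: zeroF_def fun_eq_iff)
  qed
  have "ideal_prod X I J \<subseteq> {zeroF}"
    unfolding ideal_prod_def using zero_ideal prods by blast
  moreover have "zeroF \<in> ideal_prod X I J"
    unfolding ideal_prod_def is_ideal_def by auto
  ultimately show "ideal_prod X I J = {zeroF}" by auto
qed

lemma AX_iff: "I \<in> AX X \<longleftrightarrow> is_ideal X I \<and> cozU X I \<noteq> {} \<and>
   (\<exists>J. is_ideal X J \<and> cozU X J \<noteq> {} \<and> cozU X I \<inter> cozU X J = {})"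
proof -
  have "I \<in> AX X \<longleftrightarrow> is_ideal X I \<and> I \<noteq> {zeroF} \<and>
     (\<exists>J. is_ideal X J \<and> J \<noteq> {zeroF} \<and> ideal_prod X I J = {zeroF})"
    by (simp add: AX_def)
  also have "\<dots> \<longleftrightarrow> is_ideal X I \<and> cozU X I \<noteq> {} \<and>
   (\<exists>J. is_ideal X J \<and> cozU X J \<noteq> {} \<and> cozU X I \<inter> cozU X J = {})"
  proof (cases "is_ideal X I")
    case True
    then show ?thesis using nonzero_iff[of X] prod_zero_iff[of X I] by metis
  qed simp
  finally show ?thesis .
qed

lemma adj_iff: "adj X I J \<longleftrightarrow> I \<in> AX X \<and> J \<in> AX X \<and> I \<noteq> J \<and> cozU X I \<inter> cozU X J = {}"
proof -
  have "I \<in> AX X \<Longrightarrow> J \<in> AX X \<Longrightarrow> (ideal_prod X I J = {zeroF}) = (cozU X I \<inter> cozU X J = {})"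
    by (rule prod_zero_iff) (simp_all add: AX_iff)
  then show ?thesis unfolding adj_def by metis
qed

lemma SU_ideal: "is_ideal X (SU X U)"
proof -
  have a: "(\<lambda>x. f x + g x) \<in> SU X U" if "f \<in> SU X U" "g \<in> SU X U" for f g
  proof -
    have c: "continuous_map X euclideanreal (\<lambda>x. f x + g x)"
      using that by (intro continuous_map_add) (auto simp: SU_def CX_def)
    have "Coz X (\<lambda>x. f x + g x) \<subseteq> Coz X f \<union> Coz X g" by (auto simp: Coz_def)
    then show ?thesis using that c by (auto simp: SU_def CX_def)
  qed
  have m: "(\<lambda>x. h x * f x) \<in> SU X U" if "f \<in> SU X U" "h \<in> CX X" for f h
  proof -
    have c: "continuous_map X euclideanreal (\<lambda>x. h x * f x)"
      using that by (intro continuous_map_real_mult) (auto simp: SU_def CX_def)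
    have "Coz X (\<lambda>x. h x * f x) \<subseteq> Coz X f" by (auto simp: Coz_def)
    then show ?thesis using that c by (auto simp: SU_def CX_def)
  qed
  have z: "zeroF \<in> SU X U" using zeroF_CX by (simp add: SU_def Coz_def zeroF_def)
  have s: "SU X U \<subseteq> CX X" by (auto simp: SU_def)
  show ?thesis unfolding is_ideal_def
    apply (intro conjI s z ballI)
     apply (rule a; assumption)
    apply (rule m; assumption)
    done
qed

lemma bump:
  assumes "tychonoff_space X" "openin X U" "x \<in> U"
  shows "\<exists>f \<in> CX X. f x \<noteq> 0 \<and> Coz X f \<subseteq> U"
proof -
  have cr: "completely_regular_space X" using assms(1) by (simp add: tychonoff_space_def)
  have "closedin X (topspace X - U)" using assms(2) by blast
  moreover have "x \<in> topspace X - (topspace X - U)" using assms openin_subset by fastforce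
  ultimately obtain g :: "'a \<Rightarrow> real" where g: "continuous_map X (top_of_set {0..1}) g" "g x = 0"
    "g ` (topspace X - U) \<subseteq> {1}"
    using cr[unfolded completely_regular_space_def, rule_format, of "topspace X - U" x] by auto
  have gc: "continuous_map X euclideanreal g"
    using g(1) continuous_map_in_subtopology by blast
  have c1: "continuous_map X euclideanreal (\<lambda>y. 1 - g y)"
    by (intro continuous_intros gc)
  define f where "f = (\<lambda>y. if y \<in> topspace X then 1 - g y else 0)"
  have "continuous_map X euclideanreal f"
    using c1 by (rule continuous_map_eq) (simp add: f_def)
  then have "f \<in> CX X" by (simp add: CX_def f_def)
  moreover have "f x \<noteq> 0" using g(2) \<open>x \<in> topspace X - (topspace X - U)\<close> by (simp add: f_def)
  moreover have "Coz X f \<subseteq> U" using g(3) by (auto simp: Coz_def f_def)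
  ultimately show ?thesis by blast
qed

lemma cozU_SU:
  assumes "tychonoff_space X" "openin X U"
  shows "cozU X (SU X U) = U"
proof
  show "cozU X (SU X U) \<subseteq> U" unfolding cozU_def SU_def by auto
  show "U \<subseteq> cozU X (SU X U)"
  proof
    fix x assume "x \<in> U"
    then obtain f where "f \<in> CX X" "f x \<noteq> 0" "Coz X f \<subseteq> U" using bump[OF assms(1,2)] by blast
    moreover have "x \<in> topspace X" using \<open>x \<in> U\<close> assms(2) openin_subset by blast
    ultimately have "f \<in> SU X U" "x \<in> Coz X f" by (auto simp: SU_def Coz_def)
    then show "x \<in> cozU X (SU X U)" unfolding cozU_def by blast
  qed
qed

lemma gdist_le: "walk X p n \<Longrightarrow> p 0 = I \<Longrightarrow> p n = J \<Longrightarrow> gdist X I J \<le> enat n"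
  unfolding gdist_def by (rule INF_lower) auto

lemma gdist_ge: "(\<And>m p. walk X p m \<Longrightarrow> p 0 = I \<Longrightarrow> p m = J \<Longrightarrow> n \<le> m) \<Longrightarrow> enat n \<le> gdist X I J"
  unfolding gdist_def by (rule INF_greatest) auto

lemma adj_AX: "adj X I J \<Longrightarrow> I \<in> AX X \<and> J \<in> AX X"
  by (simp add: adj_def)

lemma adj_sym: "adj X I J \<Longrightarrow> adj X J I"
  by (auto simp: adj_iff)

lemma d0: "I \<in> AX X \<Longrightarrow> gdist X I I \<le> 0"
  using gdist_le[of X "\<lambda>_. I" 0 I I] by (simp add: walk_def zero_enat_def)

lemma d1: "adj X I J \<Longrightarrow> gdist X I J \<le> 1"
proof -
  assume a: "adj X I J"
  have "walk X (\<lambda>i. if i = 0 then I else J) 1"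
    using a adj_AX[OF a] by (auto simp: walk_def le_Suc_eq)
  then show ?thesis using gdist_le[of X "\<lambda>i. if i = 0 then I else J" 1 I J] by (simp add: one_enat_def)
qed

lemma d2: "adj X I K \<Longrightarrow> adj X K J \<Longrightarrow> gdist X I J \<le> 2"
proof -
  assume a: "adj X I K" and b: "adj X K J"
  let ?p = "\<lambda>i::nat. if i = 0 then I else if i = 1 then K else J"
  have "walk X ?p 2"
    using a b adj_AX[OF a] adj_AX[OF b] by (auto simp: walk_def le_Suc_eq less_Suc_eq numeral_2_eq_2)
  then show ?thesis using gdist_le[of X ?p 2 I J] by (simp add: numeral_eq_enat)
qed

lemma d3: "adj X I K \<Longrightarrow> adj X K L \<Longrightarrow> adj X L J \<Longrightarrow> gdist X I J \<le> 3"
proof -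
  assume a: "adj X I K" and b: "adj X K L" and c: "adj X L J"
  let ?p = "\<lambda>i::nat. if i = 0 then I else if i = 1 then K else if i = 2 then L else J"
  have "walk X ?p 3"
    using a b c adj_AX[OF a] adj_AX[OF b] adj_AX[OF c]
    by (auto simp: walk_def le_Suc_eq less_Suc_eq numeral_2_eq_2 numeral_3_eq_3)
  then show ?thesis using gdist_le[of X ?p 3 I J] by (simp add: numeral_eq_enat)
qed

lemma ge1: "I \<noteq> J \<Longrightarrow> 1 \<le> gdist X I J"
proof -
  assume "I \<noteq> J"
  have "enat 1 \<le> gdist X I J"
  proof (rule gdist_ge)
    fix m p assume "walk X p m" "p 0 = I" "p m = J"
    then show "1 \<le> m" using \<open>I \<noteq> J\<close> by (cases m) auto
  qed
  then show ?thesis by (simp add: one_enat_def)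
qed

lemma ge2: "I \<noteq> J \<Longrightarrow> \<not> adj X I J \<Longrightarrow> 2 \<le> gdist X I J"
proof -
  assume h: "I \<noteq> J" "\<not> adj X I J"
  have "enat 2 \<le> gdist X I J"
  proof (rule gdist_ge)
    fix m p assume w: "walk X p m" "p 0 = I" "p m = J"
    show "2 \<le> m"
    proof (rule ccontr)
      assume "\<not> 2 \<le> m"
      then have "m = 0 \<or> m = 1" by auto
      then show False
      proof
        assume "m = 0" then show False using w h by auto
      next
        assume "m = 1"
        then have "adj X (p 0) (p 1)" using w(1) by (simp add: walk_def)
        then show False using w h \<open>m = 1\<close> by simp
      qed
    qed
  qed
  then show ?thesis by (simp add: numeral_eq_enat)
qed

lemma ge3: "I \<noteq> J \<Longrightarrow> \<not> adj X I J \<Longrightarrow> \<not> (\<exists>K. adj X I K \<and> adj X K J) \<Longrightarrow> 3 \<le> gdist X I J"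
proof -
  assume h: "I \<noteq> J" "\<not> adj X I J" "\<not> (\<exists>K. adj X I K \<and> adj X K J)"
  have "enat 3 \<le> gdist X I J"
  proof (rule gdist_ge)
    fix m p assume w: "walk X p m" "p 0 = I" "p m = J"
    show "3 \<le> m"
    proof (rule ccontr)
      assume "\<not> 3 \<le> m"
      then have "m = 0 \<or> m = 1 \<or> m = 2" by auto
      then show False
      proof (elim disjE)
        assume "m = 0" then show False using w h by auto
      next
        assume "m = 1"
        then have "adj X (p 0) (p 1)" using w(1) by (simp add: walk_def)
        then show False using w h \<open>m = 1\<close> by simp
      next
        assume "m = 2"
        then have all: "\<forall>i<Suc (Suc 0). adj X (p i) (p (Suc i))" using w(1) by (simp add: walk_def numeral_2_eq_2)
        have a1: "adj X (p 0) (p (Suc 0))" using all by simp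
        have a2: "adj X (p (Suc 0)) (p (Suc (Suc 0)))" using all by simp
        have "p (Suc (Suc 0)) = J" using w(3) \<open>m = 2\<close> by (simp add: numeral_2_eq_2)
        then show False using a1 a2 w(2) h(3) by auto
      qed
    qed
  qed
  then show ?thesis by (simp add: numeral_eq_enat)
qed

lemma ecc_le: "(\<And>J. J \<in> AX X \<Longrightarrow> gdist X I J \<le> n) \<Longrightarrow> ecc X I \<le> n"
  unfolding ecc_def by (rule SUP_least)

lemma ecc_ge: "J \<in> AX X \<Longrightarrow> n \<le> gdist X I J \<Longrightarrow> n \<le> ecc X I"
  unfolding ecc_def by (rule SUP_upper2)

lemma AX_mk: "is_ideal X J \<Longrightarrow> cozU X J \<noteq> {} \<Longrightarrow> is_ideal X K \<Longrightarrow> cozU X K \<noteq> {}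
   \<Longrightarrow> cozU X J \<inter> cozU X K = {} \<Longrightarrow> J \<in> AX X"
  unfolding AX_iff by blast

lemma adj_mk: "I \<in> AX X \<Longrightarrow> J \<in> AX X \<Longrightarrow> cozU X I \<inter> cozU X J = {} \<Longrightarrow> adj X I J"
  unfolding adj_iff by (metis AX_iff inf.idem)

lemma ann_adj: "I \<in> AX X \<Longrightarrow> \<exists>J. adj X I J"
proof -
  assume I: "I \<in> AX X"
  then obtain J where J: "is_ideal X J" "cozU X J \<noteq> {}" "cozU X I \<inter> cozU X J = {}"
    by (auto simp: AX_iff)
  have "J \<in> AX X" using AX_mk[OF J(1,2), of I] I J(3) by (auto simp: AX_iff Int_commute)
  then show ?thesis using adj_mk[OF I _ J(3)] by blast
qed

lemma AX_coz: "I \<in> AX X \<Longrightarrow> is_ideal X I \<and> cozU X I \<noteq> {}"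
  by (simp add: AX_iff)

lemma diam3:
  assumes T: "tychonoff_space X" and I: "I \<in> AX X" and J: "J \<in> AX X"
  shows "gdist X I J \<le> 3"
proof -
  have oI: "openin X (cozU X I)" and oJ: "openin X (cozU X J)"
    using AX_coz[OF I] AX_coz[OF J] cozU_open by blast+
  show ?thesis
  proof (cases "I = J")
    case True
    then show ?thesis using d0[OF I] by (meson order_trans zero_le)
  next
    case ne: False
    show ?thesis
    proof (cases "cozU X I \<inter> cozU X J = {}")
      case True
      then have "gdist X I J \<le> 1" using d1 adj_iff I J ne by blast
      then show ?thesis by (rule order_trans) (simp add: one_enat_def numeral_eq_enat)
    next
      case nd: False
      define W where "W = topspace X - X closure_of (cozU X I \<union> cozU X J)"
      have oW: "openin X W" unfolding W_def by (rule openin_diff) auto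
      show ?thesis
      proof (cases "W = {}")
        case False
        define K where "K = SU X W"
        have cK: "cozU X K = W" unfolding K_def by (rule cozU_SU[OF T oW])
        have sub: "cozU X I \<union> cozU X J \<subseteq> X closure_of (cozU X I \<union> cozU X J)"
          by (rule closure_of_subset) (simp add: cozU_sub)
        have dI: "cozU X I \<inter> cozU X K = {}" and dJ: "cozU X K \<inter> cozU X J = {}"
          using sub cK W_def by auto
        have KA: "K \<in> AX X"
          using AX_mk[of X K I] SU_ideal AX_coz[OF I] cK False dI K_def by (auto simp: Int_commute)
        have "gdist X I J \<le> 2" using d2[OF adj_mk[OF I KA dI] adj_mk[OF KA J dJ]] .
        then show ?thesis by (rule order_trans) (simp add: numeral_eq_enat)
      next
        case True
        obtain I' where aI: "adj X I I'" using ann_adj[OF I] by blast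
        obtain J' where aJ: "adj X J J'" using ann_adj[OF J] by blast
        have I'A: "I' \<in> AX X" and J'A: "J' \<in> AX X" using aI aJ by (auto simp: adj_iff)
        have o': "openin X (cozU X I' \<inter> cozU X J')"
          using AX_coz[OF I'A] AX_coz[OF J'A] cozU_open by blast
        have e1: "(cozU X I' \<inter> cozU X J') \<inter> (cozU X I \<union> cozU X J) = {}"
          using aI aJ by (auto simp: adj_iff)
        have "(cozU X I' \<inter> cozU X J') \<inter> X closure_of (cozU X I \<union> cozU X J) = {}"
          by (subst openin_Int_closure_of_eq_empty[OF o']) (rule e1)
        moreover have "X closure_of (cozU X I \<union> cozU X J) = topspace X"
          using True closure_of_subset_topspace[of X] unfolding W_def by blast
        ultimately have "cozU X I' \<inter> cozU X J' = {}" using cozU_sub[of X I'] by blast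
        then have "adj X I' J'" by (rule adj_mk[OF I'A J'A])
        then show ?thesis using d3[OF aI _ adj_sym[OF aJ]] by blast
      qed
    qed
  qed
qed

lemma singB:
  assumes I: "I \<in> AX X" and x: "cozU X I = {x}" and J: "J \<in> AX X"
  shows "gdist X I J \<le> 2"
proof (cases "I = J")
  case True
  then show ?thesis using d0[OF I] by (meson order_trans zero_le)
next
  case ne: False
  show ?thesis
  proof (cases "x \<in> cozU X J")
    case False
    then have "adj X I J" using adj_mk[OF I J] x by auto
    then have "gdist X I J \<le> 1" by (rule d1)
    then show ?thesis by (rule order_trans) (simp add: one_enat_def numeral_eq_enat)
  next
    case True
    obtain J' where aJ: "adj X J J'" using ann_adj[OF J] by blast
    have J'A: "J' \<in> AX X" using aJ by (simp add: adj_iff)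
    have "x \<notin> cozU X J'" using aJ True by (auto simp: adj_iff)
    then have "adj X I J'" using adj_mk[OF I J'A] x by auto
    then show ?thesis using d2 adj_sym[OF aJ] by blast
  qed
qed

lemma clopen_cont:
  assumes "openin X S" "closedin X S"
  shows "continuous_map X euclideanreal (\<lambda>y. if y \<in> S then c else (0::real))"
  unfolding continuous_map
proof (intro conjI allI impI)
  show "(\<lambda>y. if y \<in> S then c else 0) ` topspace X \<subseteq> topspace euclideanreal" by simp
  fix U :: "real set" assume "openin euclideanreal U"
  have S: "S \<subseteq> topspace X" using openin_subset[OF assms(1)] .
  have eq: "{y \<in> topspace X. (if y \<in> S then c else 0) \<in> U} =
     (if c \<in> U then S else {}) \<union> (if 0 \<in> U then topspace X - S else {})"
  proof (cases "c \<in> U"; cases "0 \<in> U")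
  qed (use S in auto)
  have o2: "openin X (topspace X - S)" using assms(2) by (simp add: closedin_def)
  show "openin X {y \<in> topspace X. (if y \<in> S then c else 0) \<in> U}"
    unfolding eq by (cases "c \<in> U"; cases "0 \<in> U") (simp_all add: assms(1) o2 openin_Un)
qed

lemma singL:
  assumes t1: "t1_space X" and I: "is_ideal X I" and x: "cozU X I = {x}"
  shows "I = SU X {x}"
proof
  show "I \<subseteq> SU X {x}"
  proof
    fix f assume f: "f \<in> I"
    then have c1: "Coz X f \<subseteq> cozU X I" unfolding cozU_def by blast
    have c2: "f \<in> CX X" using ideal_sub[OF I f] .
    have c3: "Coz X f \<subseteq> {x}" using c1 unfolding x .
    show "f \<in> SU X {x}" unfolding SU_def using c2 c3 by (rule CollectI[of _ f, OF conjI])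
  qed
  show "SU X {x} \<subseteq> I"
  proof
    fix f assume f: "f \<in> SU X {x}"
    have xI: "x \<in> cozU X I" using x by simp
    have xt: "x \<in> topspace X" using xI cozU_sub[of X I] by (rule subsetD[rotated])
    obtain g where g: "g \<in> I" "g x \<noteq> 0" using xI unfolding cozU_def Coz_def by blast
    define h where "h = (\<lambda>y. if y \<in> {x} then f x / g x else (0::real))"
    have "openin X {x}" using cozU_open[OF I] unfolding x .
    moreover have "closedin X {x}" using t1 xt unfolding t1_space_closedin_singleton by blast
    ultimately have "continuous_map X euclideanreal h" unfolding h_def by (rule clopen_cont)
    then have hC: "h \<in> CX X" using xt by (auto simp: CX_def h_def)
    have "(\<lambda>y. h y * g y) \<in> I" using ideal_mul[OF I g(1) hC] .
    moreover have "(\<lambda>y. h y * g y) = f"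
    proof
      fix y show "h y * g y = f y"
      proof (cases "y = x")
        case True then show ?thesis using g(2) by (simp add: h_def)
      next
        case False
        have "f y = 0"
        proof (cases "y \<in> topspace X")
          case True then show ?thesis using f False by (auto simp: SU_def Coz_def)
        next
          case False then show ?thesis using f by (auto simp: SU_def CX_def)
        qed
        then show ?thesis using False by (simp add: h_def)
      qed
    qed
    ultimately show "f \<in> I" by metis
  qed
qed

lemma tych_t1: "tychonoff_space X \<Longrightarrow> t1_space X"
  by (simp add: tychonoff_space_def)

lemma tych_H: "tychonoff_space X \<Longrightarrow> Hausdorff_space X"
  unfolding tychonoff_space_def
  using completely_regular_imp_regular_space regular_t1_imp_Hausdorff_space by blast

lemma sep:
  assumes "tychonoff_space X" "y \<in> topspace X" "z \<in> topspace X" "y \<noteq> z"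
  obtains V W where "openin X V" "openin X W" "y \<in> V" "z \<in> W" "V \<inter> W = {}"
proof -
  have "Hausdorff_space X" using tych_H[OF assms(1)] .
  then have "\<exists>U V. openin X U \<and> openin X V \<and> y \<in> U \<and> z \<in> V \<and> disjnt U V"
    unfolding Hausdorff_space_def using assms(2-4) by blast
  then show ?thesis using that unfolding disjnt_def by blast
qed

lemma singC:
  assumes t1: "t1_space X" and I: "I \<in> AX X" and x: "cozU X I = {x}"
    and top: "topspace X = {x, y}" and J: "J \<in> AX X"
  shows "gdist X I J \<le> 1"
proof (cases "I = J")
  case True
  then show ?thesis using d0[OF I] by (meson order_trans zero_le)
next
  case ne: False
  show ?thesis
  proof (cases "x \<in> cozU X J")
    case False
    then have "cozU X I \<inter> cozU X J = {}" using x by auto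
    then have "adj X I J" by (rule adj_mk[OF I J])
    then show ?thesis by (rule d1)
  next
    case True
    obtain J' where aJ: "adj X J J'" using ann_adj[OF J] by blast
    have J'A: "J' \<in> AX X" using aJ by (simp add: adj_iff)
    have dis: "cozU X J \<inter> cozU X J' = {}" using aJ by (simp add: adj_iff)
    have ne': "cozU X J' \<noteq> {}" using AX_coz[OF J'A] by blast
    have "cozU X J' \<subseteq> {x, y}" using cozU_sub[of X J'] unfolding top .
    then have "y \<in> cozU X J'" using ne' dis True by blast
    then have "y \<notin> cozU X J" using dis by blast
    moreover have "cozU X J \<subseteq> {x, y}" using cozU_sub[of X J] unfolding top .
    ultimately have "cozU X J = {x}" using True by blast
    then have "J = SU X {x}" using singL[OF t1] AX_coz[OF J] by blast
    moreover have "I = SU X {x}" using singL[OF t1] AX_coz[OF I] x by blast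
    ultimately show ?thesis using ne by simp
  qed
qed

lemma singD:
  assumes T: "tychonoff_space X" and I: "I \<in> AX X" and x: "cozU X I = {x}"
    and yz: "y \<in> topspace X" "z \<in> topspace X" "x \<noteq> y" "x \<noteq> z" "y \<noteq> z"
  shows "\<exists>J \<in> AX X. 2 \<le> gdist X I J"
proof -
  obtain V W where VW: "openin X V" "openin X W" "y \<in> V" "z \<in> W" "V \<inter> W = {}"
    using sep[OF T yz(1,2,5)] by blast
  have xt: "x \<in> topspace X" using x cozU_sub[of X I] by blast
  have cx: "closedin X {x}" using tych_t1[OF T] xt unfolding t1_space_closedin_singleton by blast
  have ox: "openin X {x}" using cozU_open[OF AX_coz[OF I, THEN conjunct1]] unfolding x .
  define U where "U = {x} \<union> (V - {x})"
  define W' where "W' = W - {x}"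
  have oU: "openin X U" unfolding U_def using ox VW(1) cx by (intro openin_Un openin_diff)
  have oW: "openin X W'" unfolding W'_def using VW(2) cx by (intro openin_diff)
  have cU: "cozU X (SU X U) = U" by (rule cozU_SU[OF T oU])
  have cW: "cozU X (SU X W') = W'" by (rule cozU_SU[OF T oW])
  have "U \<inter> W' = {}" unfolding U_def W'_def using VW(5) by blast
  moreover have "x \<in> U" "y \<in> U" "z \<in> W'" unfolding U_def W'_def using VW yz by auto
  ultimately have JA: "SU X U \<in> AX X"
    using AX_mk[OF SU_ideal _ SU_ideal, of X U W'] cU cW by blast
  have ne: "I \<noteq> SU X U" using \<open>y \<in> U\<close> cU x yz(3) by auto
  have na: "\<not> adj X I (SU X U)" using \<open>x \<in> U\<close> cU x by (auto simp: adj_iff)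
  show ?thesis using ge2[OF ne na] JA by blast
qed

lemma notsingE:
  assumes T: "tychonoff_space X" and I: "I \<in> AX X" and ns: "\<not> (\<exists>x. cozU X I = {x})"
  shows "\<exists>J \<in> AX X. 3 \<le> gdist X I J"
proof -
  have iI: "is_ideal X I" and nI: "cozU X I \<noteq> {}" using AX_coz[OF I] by auto
  obtain a where a: "a \<in> cozU X I" using nI by blast
  obtain b where b: "b \<in> cozU X I" "b \<noteq> a" using ns a by blast
  have at: "a \<in> topspace X" and bt: "b \<in> topspace X" using a b cozU_sub[of X I] by blast+
  obtain Va Vb where V: "openin X Va" "openin X Vb" "a \<in> Va" "b \<in> Vb" "Va \<inter> Vb = {}"
    using sep[OF T at bt b(2)[symmetric]] by blast
  define A where "A = Vb \<inter> cozU X I"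
  define C where "C = X closure_of A"
  define Oo where "Oo = topspace X - C"
  have oUI: "openin X (cozU X I)" by (rule cozU_open[OF iI])
  have oA: "openin X A" unfolding A_def using V(2) oUI by (rule openin_Int)
  have oO: "openin X Oo" unfolding Oo_def C_def by (rule openin_diff) auto
  have At: "A \<subseteq> topspace X" unfolding A_def using cozU_sub[of X I] by blast
  have AC: "A \<subseteq> C" unfolding C_def by (rule closure_of_subset[OF At])
  have "Va \<inter> A = {}" unfolding A_def using V(5) by blast
  then have "Va \<inter> C = {}" unfolding C_def using openin_Int_closure_of_eq_empty[OF V(1)] by blast
  then have aO: "a \<in> Oo" unfolding Oo_def using V(3) at by blast
  have bA: "b \<in> A" unfolding A_def using V(4) b(1) by blast
  have cJ: "cozU X (SU X Oo) = Oo" by (rule cozU_SU[OF T oO])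
  have cK: "cozU X (SU X A) = A" by (rule cozU_SU[OF T oA])
  have OA: "Oo \<inter> A = {}" unfolding Oo_def using AC by blast
  have JA: "SU X Oo \<in> AX X"
    using AX_mk[OF SU_ideal _ SU_ideal, of X Oo A] cJ cK OA aO bA by blast
  have ne: "I \<noteq> SU X Oo"
  proof
    assume "I = SU X Oo"
    then have "cozU X I = Oo" using cJ by simp
    then show False using b(1) bA AC unfolding Oo_def by blast
  qed
  have na: "\<not> adj X I (SU X Oo)" using a aO cJ by (auto simp: adj_iff)
  have nk: "\<not> (\<exists>K. adj X I K \<and> adj X K (SU X Oo))"
  proof
    assume "\<exists>K. adj X I K \<and> adj X K (SU X Oo)"
    then obtain K where K: "adj X I K" "adj X K (SU X Oo)" by blast
    have KA: "K \<in> AX X" using K(1) by (simp add: adj_iff)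
    have d1: "cozU X I \<inter> cozU X K = {}" using K(1) by (simp add: adj_iff)
    have d2: "cozU X K \<inter> Oo = {}" using K(2) cJ by (simp add: adj_iff)
    have oK: "openin X (cozU X K)" using cozU_open AX_coz[OF KA] by blast
    have "cozU X K \<inter> A = {}" unfolding A_def using d1 by blast
    then have "cozU X K \<inter> C = {}" unfolding C_def using openin_Int_closure_of_eq_empty[OF oK] by blast
    moreover have "cozU X K \<subseteq> topspace X" by (rule cozU_sub)
    ultimately have "cozU X K = {}" using d2 unfolding Oo_def by blast
    then show False using AX_coz[OF KA] by blast
  qed
  show ?thesis using ge3[OF ne na nk] JA by blast
qed

lemma three:
  assumes "x \<in> S" "infinite S \<or> 2 < card S"
  shows "\<exists>y z. y \<in> S \<and> z \<in> S \<and> x \<noteq> y \<and> x \<noteq> z \<and> y \<noteq> z"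
proof (rule ccontr)
  assume na: "\<not> ?thesis"
  show False
  proof (cases "S - {x} = {}")
    case True
    then have "S = {x}" using assms(1) by blast
    then show False using assms(2) by simp
  next
    case False
    then obtain y where y: "y \<in> S" "y \<noteq> x" by blast
    have "S \<subseteq> {x, y}" using na y by blast
    moreover have "card {x, y} \<le> 2" by (cases "x = y") auto
    ultimately show False using assms(2) card_mono[of "{x,y}" S] finite_subset[of S "{x,y}"]
      by fastforce
  qed
qed

lemma two:
  assumes "finite S" "card S = 2" "x \<in> S"
  shows "\<exists>y. S = {x, y} \<and> x \<noteq> y"
proof -
  obtain u v where "S = {u, v}" "u \<noteq> v" using assms(2) card_2_iff by metis
  then show ?thesis using assms(3) by (metis insert_commute empty_iff insert_iff)
qed

lemma ge_two_card:
  assumes "finite S" "x \<in> S" "y \<in> S" "x \<noteq> y"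
  shows "2 \<le> card S"
proof -
  have "card {x, y} \<le> card S" using assms by (intro card_mono) auto
  then show ?thesis using assms(4) by simp
qed

theorem mainTheorem10:
  fixes X :: "'a topology" and I :: "('a \<Rightarrow> real) set"
  assumes "tychonoff_space X"
    and "\<exists>x y. x \<in> topspace X \<and> y \<in> topspace X \<and> x \<noteq> y"
    and "I \<in> AX X"
  shows "(ecc X I = 3 \<longleftrightarrow> \<not> (\<exists>x. cozU X I = {x}))
    \<and> (ecc X I = 2 \<longleftrightarrow> (\<exists>x. cozU X I = {x}) \<and> (infinite (topspace X) \<or> card (topspace X) > 2))
    \<and> (ecc X I = 1 \<longleftrightarrow> (\<exists>x. cozU X I = {x}) \<and> finite (topspace X) \<and> card (topspace X) = 2)"
proof -
  note T = assms(1) and I = assms(3)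
  obtain x0 y0 where xy0: "x0 \<in> topspace X" "y0 \<in> topspace X" "x0 \<noteq> y0" using assms(2) by blast
  have nums: "(1::enat) \<noteq> 2" "(1::enat) \<noteq> 3" "(2::enat) \<noteq> 3"
    by (simp_all add: numeral_eq_enat one_enat_def)
  have cardc: "(infinite (topspace X) \<or> card (topspace X) > 2) \<longleftrightarrow>
      \<not> (finite (topspace X) \<and> card (topspace X) = 2)"
    using ge_two_card[OF _ xy0] by fastforce
  have A: "ecc X I = 3" if ns: "\<not> (\<exists>x. cozU X I = {x})"
  proof (rule antisym)
    show "ecc X I \<le> 3" by (rule ecc_le) (rule diam3[OF T I])
    obtain J where "J \<in> AX X" "3 \<le> gdist X I J" using notsingE[OF T I ns] by blast
    then show "3 \<le> ecc X I" by (rule ecc_ge)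
  qed
  have B: "ecc X I = 2" if x: "cozU X I = {x}" and c: "infinite (topspace X) \<or> card (topspace X) > 2" for x
  proof (rule antisym)
    show "ecc X I \<le> 2" by (rule ecc_le) (rule singB[OF I x])
    have xt: "x \<in> topspace X" using x cozU_sub[of X I] by blast
    obtain y z where "y \<in> topspace X" "z \<in> topspace X" "x \<noteq> y" "x \<noteq> z" "y \<noteq> z"
      using three[OF xt c] by blast
    then obtain J where "J \<in> AX X" "2 \<le> gdist X I J" using singD[OF T I x] by blast
    then show "2 \<le> ecc X I" by (rule ecc_ge)
  qed
  have C: "ecc X I = 1" if x: "cozU X I = {x}" and c: "finite (topspace X)" "card (topspace X) = 2" for x
  proof (rule antisym)
    have xt: "x \<in> topspace X" using x cozU_sub[of X I] by blast
    obtain y where y: "topspace X = {x, y}" "x \<noteq> y" using two[OF c xt] by blast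
    show "ecc X I \<le> 1" by (rule ecc_le) (rule singC[OF tych_t1[OF T] I x y(1)])
    obtain J where aJ: "adj X I J" using ann_adj[OF I] by blast
    then have "J \<in> AX X" "I \<noteq> J" by (simp_all add: adj_iff)
    then show "1 \<le> ecc X I" using ge1 ecc_ge by blast
  qed
  show ?thesis
  proof (cases "\<exists>x. cozU X I = {x}")
    case False
    then show ?thesis using A nums by auto
  next
    case True
    then obtain x where x: "cozU X I = {x}" by blast
    show ?thesis
    proof (cases "infinite (topspace X) \<or> card (topspace X) > 2")
      case True
      then have "ecc X I = 2" using B[OF x] by blast
      then show ?thesis using True nums x cardc by auto
    next
      case False
      then have "ecc X I = 1" using C[OF x] cardc by blast
      then show ?thesis using False nums x cardc by auto
    qed
  qed
qed

end
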